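(* Let $a,b$ be integers with $0<b<a$, let $S=\langle a,a+1,\ldots,a+b\rangle$ with conductor $c$, and let $m\ge 2c-1$. Let $M$ be an $(S,m,r)$-amenable set. Then there exists an $(S,m,r)$-amenable set $T$ whose shadow is an interval of integers containing $m$ and such that $\sharp\mathrm D(T)\le\sharp\mathrm D(M)$.
   Context: For $x\in S$, $\mathrm D(x)=\{\alpha\in S\mid x-\alpha\in S\}$ and for $A\subseteq S$, $\mathrm D(A)=\bigcup_{x\in A}\mathrm D(x)$. A set $M=\{m_1<\cdots<m_r\}\subseteq S$ with $2c-1\le m=m_1$ is $(S,m,r)$-amenable if $\mathrm D(m_i)\cap[m,\infty)\subseteq M$ for all $i$. The ground is $\{m,m+1,\ldots,m+a+b-1\}$, and the shadow of $M$ is $M\cap\{m,\ldots,m+a+b-1\}$. *)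

theory Defs
  imports Main
begin

inductive_set gen_monoid :: "nat set \<Rightarrow> nat set" for A :: "nat set" where
  zero: "0 \<in> gen_monoid A"
| add: "x \<in> A \<Longrightarrow> y \<in> gen_monoid A \<Longrightarrow> x + y \<in> gen_monoid A"

definition interval_semigroup :: "nat \<Rightarrow> nat \<Rightarrow> nat set" where
  "interval_semigroup a b = gen_monoid {a..a+b}"

definition conductor :: "nat set \<Rightarrow> nat" where
  "conductor S = (LEAST c. \<forall>n\<ge>c. n \<in> S)"

definition Dset :: "nat set \<Rightarrow> nat \<Rightarrow> nat set" where
  "Dset S x = {\<alpha> \<in> S. \<alpha> \<le> x \<and> x - \<alpha> \<in> S}"

definition DsetA :: "nat set \<Rightarrow> nat set \<Rightarrow> nat set" where
  "DsetA S A = (\<Union>x\<in>A. Dset S x)"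

definition amenable :: "nat set \<Rightarrow> nat \<Rightarrow> nat \<Rightarrow> nat set \<Rightarrow> bool" where
  "amenable S m r M \<longleftrightarrow>
     finite M \<and> card M = r \<and> M \<subseteq> S \<and> m \<in> M \<and> (\<forall>x\<in>M. m \<le> x) \<and>
     int (2 * conductor S) - 1 \<le> int m \<and>
     (\<forall>x\<in>M. Dset S x \<inter> {m..} \<subseteq> M)"

definition shadow :: "nat \<Rightarrow> nat \<Rightarrow> nat \<Rightarrow> nat set \<Rightarrow> nat set" where
  "shadow a b m M = M \<inter> {m..<m+a+b}"

end

theory Submission
  imports Defs
begin

locale ab =
  fixes a b :: nat
  assumes bpos: "0 < b" and ba: "b < a"
begin

abbreviation "S \<equiv> interval_semigroup a b"

lemma S_imp: "n \<in> gen_monoid {a..a+b} \<Longrightarrow> \<exists>t. t*a \<le> n \<and> n \<le> t*(a+b)"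
proof (induction rule: gen_monoid.induct)
  case zero
  then show ?case by (intro exI[of _ 0]) auto
next
  case (add x y)
  then obtain t where "t*a \<le> y" "y \<le> t*(a+b)" by blast
  with add.hyps(1) show ?case by (intro exI[of _ "Suc t"]) auto
qed


lemma level_in_S: "t*a \<le> n \<Longrightarrow> n \<le> t*(a+b) \<Longrightarrow> n \<in> S"
proof (induction t arbitrary: n)
  case 0
  then show ?case by (auto simp: interval_semigroup_def intro: gen_monoid.zero)
next
  case (Suc t)
  have e1: "Suc t * a = a + t*a" and e2: "Suc t * (a+b) = (a+b) + t*(a+b)" by simp_all
  show ?case
  proof (cases "n - Suc t * a \<le> b")
    case True
    have "t*a \<in> S" using Suc.IH[of "t*a"] by (simp add: mult_le_mono2)
    moreover have "n - t*a \<in> {a..a+b}" using True Suc.prems unfolding e1 by auto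
    ultimately have "(n - t*a) + t*a \<in> S" unfolding interval_semigroup_def
      by (intro gen_monoid.add) auto
    moreover have "(n - t*a) + t*a = n" using Suc.prems unfolding e1 by linarith
    ultimately show ?thesis by simp
  next
    case False
    have "t*a \<le> n - (a+b)" using False Suc.prems unfolding e1 by linarith
    moreover have "n - (a+b) \<le> t*(a+b)" using Suc.prems unfolding e2 by linarith
    ultimately have "n - (a+b) \<in> S" using Suc.IH by blast
    then have "(a+b) + (n - (a+b)) \<in> S" unfolding interval_semigroup_def
      by (intro gen_monoid.add) auto
    moreover have "(a+b) + (n - (a+b)) = n" using False Suc.prems unfolding e1 by linarith
    ultimately show ?thesis by simp
  qed
qed


lemma S_char: "n \<in> S \<longleftrightarrow> (\<exists>t. t*a \<le> n \<and> n \<le> t*(a+b))"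
  using S_imp level_in_S unfolding interval_semigroup_def by blast

lemma S_add: "x \<in> S \<Longrightarrow> y \<in> S \<Longrightarrow> x + y \<in> S"
proof -
  assume "x \<in> S" "y \<in> S"
  then obtain t t' where "t*a \<le> x" "x \<le> t*(a+b)" "t'*a \<le> y" "y \<le> t'*(a+b)"
    unfolding S_char by blast
  moreover have "(t+t')*a = t*a + t'*a" "(t+t')*(a+b) = t*(a+b) + t'*(a+b)"
    by (simp_all add: add_mult_distrib)
  ultimately show ?thesis by (intro level_in_S[of "t+t'"]) linarith+
qed

lemma nonS: assumes "j*b < u" "u < a" shows "j*a + u \<notin> S"
proof
  assume "j*a + u \<in> S"
  then obtain t where t: "t*a \<le> j*a + u" "j*a + u \<le> t*(a+b)" unfolding S_char by blast
  show False
  proof (cases "t \<le> j")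
    case True
    then have "t*(a+b) \<le> j*(a+b)" by (rule mult_le_mono1)
    moreover have "j*(a+b) = j*a + j*b" by (simp add: add_mult_distrib2)
    ultimately show False using t assms by linarith
  next
    case False
    then have "Suc j * a \<le> t*a" by (intro mult_le_mono1) auto
    then show False using t assms by simp
  qed
qed

lemma big_in_S: assumes "a*a \<le> n" shows "n \<in> S"
proof -
  let ?t = "n div a"
  have a0: "0 < a" using ba by auto
  have n: "n = ?t*a + n mod a" by simp
  have "a*a div a \<le> n div a" using assms by (rule div_le_mono)
  then have "a \<le> ?t" using a0 by simp
  have "?t * 1 \<le> ?t * b" using bpos by (intro mult_le_mono2) auto
  then have "n mod a \<le> ?t*b" using \<open>a \<le> ?t\<close> a0 
    by (metis dual_order.trans less_imp_le mod_less_divisor mult.right_neutral)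
  moreover have "?t*(a+b) = ?t*a + ?t*b" by (simp add: add_mult_distrib2)
  ultimately show ?thesis using n by (intro level_in_S[of ?t]) linarith+
qed

lemma ab_in_S: "a \<le> n \<Longrightarrow> n \<le> a + b \<Longrightarrow> n \<in> S"
  by (rule level_in_S[of 1]) auto

lemma zero_in_S: "0 \<in> S" by (rule level_in_S[of 0]) auto

lemma cond_ex: "\<exists>c. \<forall>n\<ge>c. n \<in> S" using big_in_S by blast

lemma cond_prop: "n \<ge> conductor S \<Longrightarrow> n \<in> S"
  using LeastI_ex[OF cond_ex] unfolding conductor_def by blast

lemma notS_lt: "n \<notin> S \<Longrightarrow> n < conductor S"
  using cond_prop by (meson not_le)

lemma cond_le: "conductor S \<le> a*a"
  unfolding conductor_def by (rule Least_le) (use big_in_S in blast)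


definition K :: "nat \<Rightarrow> nat set" where
  "K q = {n. \<exists>t w. n = t*a + w \<and> t*b \<le> w \<and> w < q}"

definition down :: "nat set \<Rightarrow> bool" where
  "down P \<longleftrightarrow> (\<forall>p\<in>P. \<forall>s\<in>S. s \<le> p \<longrightarrow> p - s \<in> P)"

lemma K_bound: "K q \<subseteq> {..< q*a + q}"
proof
  fix n assume "n \<in> K q"
  then obtain t w where n: "n = t*a + w" "t*b \<le> w" "w < q" unfolding K_def by blast
  have "t*1 \<le> t*b" by (rule mult_le_mono2) (use bpos in linarith)
  then have "t \<le> q" using n by linarith
  then have "t*a \<le> q*a" by (rule mult_le_mono1)
  then show "n \<in> {..< q*a + q}" unfolding lessThan_iff using n by linarith
qed

lemma K_finite: "finite (K q)"
  using K_bound finite_subset by blast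

lemma K_mono: "q \<le> q' \<Longrightarrow> K q \<subseteq> K q'"
  unfolding K_def by fastforce

lemma K_down: "down (K q)"
  unfolding down_def
proof (intro ballI impI)
  fix p s assume p: "p \<in> K q" and s: "s \<in> S" "s \<le> p"
  then obtain t w where n: "p = t*a + w" "t*b \<le> w" "w < q" unfolding K_def by blast
  obtain t' where t': "t'*a \<le> s" "s \<le> t'*(a+b)" using s S_char by blast
  have st': "t'*(a+b) = t'*a + t'*b" by (simp add: add_mult_distrib2)
  show "p - s \<in> K q"
  proof (cases "t' \<le> t")
    case True
    have "t'*b \<le> t*b" using True by (rule mult_le_mono1)
    have ta: "t*a = (t-t')*a + t'*a" using True by (metis add_mult_distrib le_add_diff_inverse2)
    have tb: "t*b = (t-t')*b + t'*b" using True by (metis add_mult_distrib le_add_diff_inverse2)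
    have "p - s = (t-t')*a + (w - (s - t'*a))" using n t' st' ta tb \<open>t'*b \<le> t*b\<close> by linarith
    moreover have "(t-t')*b \<le> w - (s - t'*a)" using n t' st' tb by linarith
    moreover have "w - (s - t'*a) < q" using n by linarith
    ultimately show ?thesis unfolding K_def by blast
  next
    case False
    then have "t*a \<le> t'*a" by (intro mult_le_mono1) auto
    then have "p - s = 0*a + (p - s)" "0*b \<le> p - s" "p - s < q" using n t' by linarith+
    then show ?thesis unfolding K_def by blast
  qed
qed

lemma K_low: assumes "q \<le> a + b" shows "K q \<inter> {..<a+b} = {..<q}"
proof
  show "K q \<inter> {..<a+b} \<subseteq> {..<q}"
  proof
    fix n assume "n \<in> K q \<inter> {..<a+b}"
    then obtain t w where n: "n = t*a + w" "t*b \<le> w" "w < q" "n < a + b" unfolding K_def by blast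
    show "n \<in> {..<q}"
    proof (cases t)
      case 0 then show ?thesis using n by simp
    next
      case (Suc t1)
      then have "a \<le> t*a" "b \<le> t*b" by simp_all
      then show ?thesis using n by linarith
    qed
  qed
next
  show "{..<q} \<subseteq> K q \<inter> {..<a+b}"
  proof
    fix n assume "n \<in> {..<q}"
    then have "n = 0*a + n \<and> 0*b \<le> n \<and> n < q" by simp
    then have "n \<in> K q" unfolding K_def by blast
    then show "n \<in> K q \<inter> {..<a+b}" using assms \<open>n \<in> {..<q}\<close> by auto
  qed
qed

lemma K_block: assumes "q \<le> a + b"
  shows "{t*(a+b)..<t*(a+b) + (q - t*b)} \<subseteq> K q \<inter> {t*(a+b)..<Suc t*(a+b)}"
proof
  fix n assume n: "n \<in> {t*(a+b)..<t*(a+b) + (q - t*b)}"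
  have st: "t*(a+b) = t*a + t*b" by (simp add: add_mult_distrib2)
  have "n = t*a + (n - t*a) \<and> t*b \<le> n - t*a \<and> n - t*a < q" using n st by auto
  then have "n \<in> K q" unfolding K_def by blast
  moreover have "n < Suc t * (a+b)" using n assms by auto
  ultimately show "n \<in> K q \<inter> {t*(a+b)..<Suc t*(a+b)}" using n by auto
qed

end

lemma erosion:
  fixes E Y :: "nat set"
  assumes "finite Y" "E \<noteq> {}" "\<forall>e\<in>E. \<forall>x. e \<le> x \<and> x \<le> e + w \<longrightarrow> x \<in> Y"
  shows "card E + w \<le> card Y"
proof -
  have EY: "E \<subseteq> Y" using assms(3) by auto
  then have fE: "finite E" using assms(1) finite_subset by blast
  define e0 where "e0 = Min E"
  have e0E: "e0 \<in> E" using fE assms(2) e0_def by simp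
  have e0le: "\<forall>e\<in>E. e0 \<le> e" using fE e0_def by simp
  let ?F = "(\<lambda>e. e + w) ` E"
  let ?I = "{e0..<e0+w}"
  have "?F \<subseteq> Y" using assms(3) by auto
  moreover have "?I \<subseteq> Y" using assms(3) e0E by auto
  ultimately have sub: "?F \<union> ?I \<subseteq> Y" by blast
  have disj: "?F \<inter> ?I = {}" using e0le by auto
  have "card ?F = card E" by (rule card_image) (simp add: inj_on_def)
  moreover have "card (?F \<union> ?I) = card ?F + card ?I"
    by (rule card_Un_disjoint) (use fE disj in auto)
  moreover have "card (?F \<union> ?I) \<le> card Y" using sub assms(1) by (rule card_mono[rotated])
  ultimately show ?thesis by simp
qed

lemma comb:
  fixes Dl E :: "nat set" and a b w z :: nat
  assumes Dl: "Dl \<subseteq> {..<a+b}" and z: "z < a+b" "z \<notin> Dl" "{z<..<a+b} \<subseteq> Dl"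
    and E: "E \<subseteq> {..<a+b}" "E \<noteq> {}"
    and W: "\<forall>e\<in>E. \<forall>x. e \<le> x \<and> x \<le> e+w \<and> x < a+b \<longrightarrow> x \<in> Dl"
    and L: "\<forall>e\<in>E. \<forall>x. x + a \<le> e + w \<and> x < a+b \<longrightarrow> x \<in> Dl"
  shows "card E + w \<le> card Dl"
proof -
  define Y where "Y = Dl \<inter> {..<z}"
  define y where "y = card Y"
  have fY: "finite Y" unfolding Y_def by simp
  have DlY: "Dl = Y \<union> {z<..<a+b}"
  proof
    show "Dl \<subseteq> Y \<union> {z<..<a+b}"
    proof
      fix x assume "x \<in> Dl"
      then have "x \<noteq> z" "x < a + b" using Dl z(2) by auto
      then show "x \<in> Y \<union> {z<..<a+b}" using \<open>x \<in> Dl\<close> unfolding Y_def by auto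
    qed
  qed (use z(3) in \<open>auto simp: Y_def\<close>)
  have cDl: "card Dl = y + (a + b - Suc z)"
    unfolding DlY y_def by (subst card_Un_disjoint) (auto simp: Y_def)
  define E1 where "E1 = E \<inter> {..<z}"
  define E2 where "E2 = E \<inter> {z<..<a+b}"
  have zE: "z \<notin> E"
  proof
    assume "z \<in> E" then have "z \<in> Dl" using W[rule_format, of z z] z(1) by simp
    then show False using z(2) by simp
  qed
  have EU: "E = E1 \<union> E2"
  proof
    show "E \<subseteq> E1 \<union> E2"
    proof
      fix x assume "x \<in> E"
      then have "x \<noteq> z" "x < a + b" using E(1) zE by auto
      then show "x \<in> E1 \<union> E2" using \<open>x \<in> E\<close> unfolding E1_def E2_def by auto
    qed
  qed (auto simp: E1_def E2_def)
  have fE: "finite E" using E finite_subset by blast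
  have cE: "card E = card E1 + card E2" unfolding EU
    by (rule card_Un_disjoint) (use fE in \<open>auto simp: E1_def E2_def\<close>)
  have E1Y: "card E1 + w \<le> y" if "E1 \<noteq> {}"
    unfolding y_def
  proof (rule erosion[OF fY that], intro ballI allI impI)
    fix e x assume e: "e \<in> E1" and x: "e \<le> x \<and> x \<le> e + w"
    have "x < z"
    proof (rule ccontr)
      assume "\<not> x < z"
      have "e \<in> E" using e unfolding E1_def by simp
      moreover have "e \<le> z" using e unfolding E1_def by simp
      moreover have "z \<le> e + w" using x \<open>\<not> x < z\<close> by simp
      ultimately have "z \<in> Dl" using W[rule_format, of e z] z(1) by simp
      then show False using z(2) by simp
    qed
    moreover have "e \<in> E" using e unfolding E1_def by simp
    ultimately have "x \<in> Dl" using W[rule_format, of e x] x z(1) \<open>x < z\<close> by simp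
    then show "x \<in> Y" using \<open>x < z\<close> unfolding Y_def by simp
  qed
  have E2b: "e + w + 1 \<le> y + a" if e: "e \<in> E2" for e
  proof (cases "e + w < a")
    case True then show ?thesis by simp
  next
    case False
    define k where "k = e + w - a"
    have "k < z"
    proof (rule ccontr)
      assume "\<not> k < z"
      then have "z + a \<le> e + w" using False k_def by simp
      moreover have "e \<in> E" using e unfolding E2_def by simp
      ultimately have "z \<in> Dl" using L[rule_format, of e z] z(1) by simp
      then show False using z(2) by simp
    qed
    have "{..k} \<subseteq> Y"
    proof
      fix x assume "x \<in> {..k}"
      then have "x \<le> k" by simp
      then have "x + a \<le> e + w" "x < z" using False k_def \<open>k < z\<close> by linarith+
      then have "x < a + b" using z(1) by linarith
      moreover have "e \<in> E" using e unfolding E2_def by simp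
      ultimately have "x \<in> Dl" using L[rule_format, of e x] \<open>x + a \<le> e + w\<close> by simp
      then show "x \<in> Y" using \<open>x < z\<close> unfolding Y_def by simp
    qed
    then have "card {..k} \<le> y" unfolding y_def using fY by (rule card_mono[rotated])
    then show ?thesis using False k_def by simp
  qed
  show ?thesis
  proof (cases "E2 = {}")
    case True
    then have "E1 \<noteq> {}" using EU E(2) by simp
    then show ?thesis using E1Y cE True cDl by simp
  next
    case False
    have fE2: "finite E2" unfolding E2_def by simp
    define em where "em = Max E2"
    have emE: "em \<in> E2" using fE2 False em_def by simp
    have E2sub: "E2 \<subseteq> {z<..em}"
    proof
      fix x assume "x \<in> E2"
      then have "x \<le> em" "z < x" using fE2 em_def unfolding E2_def by auto
      then show "x \<in> {z<..em}" by simp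
    qed
    then have cE2: "card E2 \<le> em - z" using card_mono[OF _ E2sub] by simp
    have "em + w + 1 \<le> y + a" using E2b emE by blast
    moreover have "z < em" using emE unfolding E2_def by simp
    moreover have "card E2 \<le> a + b - Suc z"
      using card_mono[of "{z<..<a+b}" E2] unfolding E2_def by simp
    ultimately show ?thesis
    proof (cases "E1 = {}")
      case True
      then show ?thesis using cE cE2 cDl \<open>em + w + 1 \<le> y + a\<close> \<open>z < em\<close> by simp
    next
      case False
      then show ?thesis using cE E1Y cDl \<open>card E2 \<le> a + b - Suc z\<close> by simp
    qed
  qed
qed

context ab begin

lemma sum_blocks: "card (A \<inter> {..<B*(a+b)}) = (\<Sum>t<B. card (A \<inter> {t*(a+b)..<Suc t*(a+b)}))"
proof (induction B)
  case 0 then show ?case by simp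
next
  case (Suc B)
  have eq: "A \<inter> {..<Suc B*(a+b)} = (A \<inter> {..<B*(a+b)}) \<union> (A \<inter> {B*(a+b)..<Suc B*(a+b)})"
    by auto
  have "card (A \<inter> {..<Suc B*(a+b)}) = card (A \<inter> {..<B*(a+b)}) + card (A \<inter> {B*(a+b)..<Suc B*(a+b)})"
    unfolding eq by (rule card_Un_disjoint) auto
  then show ?case using Suc.IH by simp
qed

lemma block_card:
  assumes dP: "down P" and fP: "finite P" and q: "card (P \<inter> {..<a+b}) < a+b"
  shows "card (P \<inter> {t*(a+b)..<Suc t*(a+b)}) \<le> card (P \<inter> {..<a+b}) - t*b"
proof (cases t)
  case 0
  then show ?thesis by (simp add: atLeast0LessThan)
next
  case (Suc t1)
  define Dl where "Dl = P \<inter> {..<a+b}"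
  define E where "E = {e. e < a+b \<and> t*(a+b) + e \<in> P}"
  have st: "t*(a+b) = t*a + t*b" by (simp add: add_mult_distrib2)
  have st1: "Suc t*(a+b) = t*(a+b) + (a+b)" by simp
  have img: "P \<inter> {t*(a+b)..<Suc t*(a+b)} = (\<lambda>e. t*(a+b) + e) ` E"
  proof
    show "P \<inter> {t*(a+b)..<Suc t*(a+b)} \<subseteq> (\<lambda>e. t*(a+b) + e) ` E"
    proof
      fix n assume n: "n \<in> P \<inter> {t*(a+b)..<Suc t*(a+b)}"
      then have "n - t*(a+b) \<in> E" "n = t*(a+b) + (n - t*(a+b))" unfolding E_def using st1 by auto
      then show "n \<in> (\<lambda>e. t*(a+b) + e) ` E" by blast
    qed
  qed (auto simp: E_def)
  have cimg: "card (P \<inter> {t*(a+b)..<Suc t*(a+b)}) = card E"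
    unfolding img by (rule card_image) (simp add: inj_on_def)
  show ?thesis
  proof (cases "E = {}")
    case True then show ?thesis using cimg by simp
  next
    case False
    have ne: "{..<a+b} - Dl \<noteq> {}"
    proof
      assume "{..<a+b} - Dl = {}"
      then have "{..<a+b} \<subseteq> Dl" by blast
      then have "card {..<a+b} \<le> card Dl" by (rule card_mono[rotated]) (simp add: Dl_def)
      then show False using q Dl_def by simp
    qed
    define z where "z = Max ({..<a+b} - Dl)"
    have zin: "z \<in> {..<a+b} - Dl" unfolding z_def using ne by (intro Max_in) auto
    have zmax: "x \<le> z" if "x \<in> {..<a+b} - Dl" for x unfolding z_def using that by (intro Max_ge) auto
    have zup: "{z<..<a+b} \<subseteq> Dl"
    proof
      fix x assume x: "x \<in> {z<..<a+b}"
      show "x \<in> Dl"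
      proof (rule ccontr)
        assume "x \<notin> Dl" then have "x \<le> z" using x zmax by auto
        then show False using x by simp
      qed
    qed
    have W: "\<forall>e\<in>E. \<forall>x. e \<le> x \<and> x \<le> e+t*b \<and> x < a+b \<longrightarrow> x \<in> Dl"
    proof (intro ballI allI impI)
      fix e x assume e: "e \<in> E" and x: "e \<le> x \<and> x \<le> e+t*b \<and> x < a+b"
      let ?n = "t*(a+b) + e"
      let ?s = "?n - x"
      have "?s \<in> S" by (rule level_in_S[of t]) (use x st in linarith)+
      moreover have "?n \<in> P" using e E_def by simp
      moreover have "?s \<le> ?n" by simp
      ultimately have "?n - ?s \<in> P" using dP unfolding down_def by blast
      moreover have "?n - ?s = x" using x st by linarith
      ultimately show "x \<in> Dl" using x Dl_def by simp
    qed
    have L: "\<forall>e\<in>E. \<forall>x. x + a \<le> e + t*b \<and> x < a+b \<longrightarrow> x \<in> Dl"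
    proof (intro ballI allI impI)
      fix e x assume e: "e \<in> E" and x: "x + a \<le> e + t*b \<and> x < a+b"
      let ?n = "t*(a+b) + e"
      let ?s = "?n - x"
      have eab: "e < a + b" using e E_def by simp
      have "Suc t * a = t*a + a" "Suc t*(a+b) = t*a + t*b + (a+b)" using st by simp_all
      then have "?s \<in> S" by (intro level_in_S[of "Suc t"]) (use x st eab in linarith)+
      moreover have "?n \<in> P" using e E_def by simp
      moreover have "?s \<le> ?n" by simp
      ultimately have "?n - ?s \<in> P" using dP unfolding down_def by blast
      moreover have "?n - ?s = x" using x st by linarith
      ultimately show "x \<in> Dl" using x Dl_def by simp
    qed
    have "card E + t*b \<le> card Dl"
    proof (rule comb[of Dl a b z E])
      show "Dl \<subseteq> {..<a+b}" unfolding Dl_def by blast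
      show "z < a+b" "z \<notin> Dl" using zin by auto
      show "{z<..<a+b} \<subseteq> Dl" by (rule zup)
      show "E \<subseteq> {..<a+b}" unfolding E_def by blast
      show "E \<noteq> {}" by (rule False)
    qed (use W L in blast)+
    then show ?thesis using cimg Dl_def by simp
  qed
qed

lemma claimA:
  assumes dP: "down P" and fP: "finite P" and q: "card (P \<inter> {..<a+b}) < a+b"
  shows "card P \<le> card (K (card (P \<inter> {..<a+b})))"
proof -
  define q where "q = card (P \<inter> {..<a+b})"
  obtain B where B: "P \<subseteq> {..<B}" using fP finite_nat_set_iff_bounded by (auto simp: subset_eq)
  have "B \<le> B*(a+b)" using ba by simp
  then have "{..<B} \<subseteq> {..<B*(a+b)}" by simp
  then have PB: "P \<inter> {..<B*(a+b)} = P" using B by (metis Int_absorb2 subset_trans)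
  have "card P = (\<Sum>t<B. card (P \<inter> {t*(a+b)..<Suc t*(a+b)}))"
    using sum_blocks[of P B] PB by simp
  also have "\<dots> \<le> (\<Sum>t<B. card (K q \<inter> {t*(a+b)..<Suc t*(a+b)}))"
  proof (rule sum_mono)
    fix t assume "t \<in> {..<B}"
    have "card (P \<inter> {t*(a+b)..<Suc t*(a+b)}) \<le> q - t*b"
      using block_card[OF dP fP q] q_def by simp
    also have "\<dots> = card {t*(a+b)..<t*(a+b) + (q - t*b)}" by simp
    also have "\<dots> \<le> card (K q \<inter> {t*(a+b)..<Suc t*(a+b)})"
      by (rule card_mono) (use K_finite K_block[of q t] q q_def in auto)
    finally show "card (P \<inter> {t*(a+b)..<Suc t*(a+b)}) \<le> card (K q \<inter> {t*(a+b)..<Suc t*(a+b)})" .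
  qed
  also have "\<dots> = card (K q \<inter> {..<B*(a+b)})" using sum_blocks[of "K q" B] by simp
  also have "\<dots> \<le> card (K q)" by (rule card_mono) (auto simp: K_finite)
  finally show ?thesis unfolding q_def .
qed


definition Qs :: "nat set \<Rightarrow> nat set" where
  "Qs P = {u. \<forall>p\<in>P. p + u + 1 \<notin> S}"

lemma Qs_down: "down (Qs P)"
  unfolding down_def
proof (intro ballI impI)
  fix u s assume u: "u \<in> Qs P" and s: "s \<in> S" "s \<le> u"
  show "u - s \<in> Qs P" unfolding Qs_def
  proof (intro CollectI ballI notI)
    fix p assume p: "p \<in> P" and h: "p + (u - s) + 1 \<in> S"
    have "p + (u - s) + 1 + s \<in> S" using S_add[OF h s(1)] .
    moreover have "p + (u - s) + 1 + s = p + u + 1" using s by simp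
    ultimately show False using u p unfolding Qs_def by auto
  qed
qed

lemma Qs_bound: assumes "0 \<in> P" shows "Qs P \<subseteq> {..<a*a}"
proof
  fix u assume "u \<in> Qs P"
  then have "u + 1 \<notin> S" using assms unfolding Qs_def by force
  then have "\<not> a*a \<le> u + 1" using big_in_S by blast
  then show "u \<in> {..<a*a}" by simp
qed

lemma Qs_finite: "0 \<in> P \<Longrightarrow> finite (Qs P)"
  using Qs_bound finite_subset by blast

lemma Qs_small:
  assumes P0: "0 \<in> P" and ne: "Qs P \<inter> {..<a+b} \<noteq> {}"
  shows "card (Qs P \<inter> {..<a+b}) + card (P \<inter> {..<a+b}) \<le> a"
proof -
  define Y where "Y = Qs P \<inter> {..<a+b}"
  define X where "X = P \<inter> {..<a+b}"
  have fY: "finite Y" unfolding Y_def by simp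
  have Ylt: "y + 1 < a" if "y \<in> Y" for y
  proof (rule ccontr)
    assume "\<not> y + 1 < a"
    then have "y + 1 \<in> S" using that unfolding Y_def by (intro ab_in_S) auto
    moreover have "0 + y + 1 \<notin> S" using that P0 unfolding Y_def Qs_def by blast
    ultimately show False by simp
  qed
  define y0 where "y0 = Min Y"
  have y0Y: "y0 \<in> Y" using fY ne unfolding y0_def Y_def by (intro Min_in) auto
  have y0le: "y0 \<le> y" if "y \<in> Y" for y using fY that unfolding y0_def by simp
  define Z1 where "Z1 = (\<lambda>y. a - 1 - y) ` Y"
  define Z2 where "Z2 = {a - y0..<a + b - y0}"
  have cZ1: "card Z1 = card Y" unfolding Z1_def
    by (rule card_image) (auto simp: inj_on_def dest!: Ylt)
  have cZ2: "card Z2 = b" unfolding Z2_def using Ylt[OF y0Y] by simp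
  have d12: "Z1 \<inter> Z2 = {}" unfolding Z1_def Z2_def using y0le Ylt by fastforce
  have XZ1: "X \<inter> Z1 = {}"
  proof (rule ccontr)
    assume "X \<inter> Z1 \<noteq> {}"
    then obtain y where y: "y \<in> Y" "a - 1 - y \<in> X" unfolding Z1_def by blast
    have "(a - 1 - y) + y + 1 = a" using Ylt[OF y(1)] by simp
    then have "(a - 1 - y) + y + 1 \<in> S" using ab_in_S by simp
    moreover have "(a - 1 - y) \<in> P" using y(2) unfolding X_def by simp
    ultimately show False using y(1) unfolding Y_def Qs_def by blast
  qed
  have XZ2: "X \<inter> Z2 = {}"
  proof (rule ccontr)
    assume "X \<inter> Z2 \<noteq> {}"
    then obtain x where x: "x \<in> X" "x \<in> Z2" by blast
    have "x + y0 + 1 \<in> S" using x(2) Ylt[OF y0Y] unfolding Z2_def by (intro ab_in_S) auto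
    moreover have "x \<in> P" using x(1) unfolding X_def by simp
    ultimately show False using y0Y unfolding Y_def Qs_def by blast
  qed
  have sub: "X \<union> (Z1 \<union> Z2) \<subseteq> {..<a+b}"
    unfolding X_def Z1_def Z2_def using Ylt bpos by auto
  have "card (X \<union> (Z1 \<union> Z2)) = card X + (card Z1 + card Z2)"
    using XZ1 XZ2 d12 fY unfolding X_def Z1_def Z2_def
    by (simp add: card_Un_disjoint Int_Un_distrib)
  moreover have "card (X \<union> (Z1 \<union> Z2)) \<le> a + b"
    using card_mono[OF _ sub] by simp
  ultimately show ?thesis using cZ1 cZ2 unfolding X_def Y_def by simp
qed

lemma K_in_Qs: assumes "P \<subseteq> K q" shows "K (a - q) \<subseteq> Qs P"
proof
  fix u assume "u \<in> K (a - q)"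
  then obtain k w where u: "u = k*a + w" "k*b \<le> w" "w < a - q" unfolding K_def by blast
  show "u \<in> Qs P" unfolding Qs_def
  proof (intro CollectI ballI)
    fix p assume "p \<in> P"
    then have "p \<in> K q" using assms by blast
    then obtain t w' where p: "p = t*a + w'" "t*b \<le> w'" "w' < q" unfolding K_def by blast
    have e1: "p + u + 1 = (t+k)*a + (w + w' + 1)" using u p by (simp add: add_mult_distrib)
    have "(t+k)*b < w + w' + 1" using u p by (simp add: add_mult_distrib)
    moreover have "w + w' + 1 < a" using u p by linarith
    ultimately show "p + u + 1 \<notin> S" unfolding e1 by (rule nonS)
  qed
qed


lemma D_card:
  assumes fX: "finite X" and Xm: "\<forall>x\<in>X. m \<le> x" and mX: "m \<in> X" and XS: "X \<subseteq> S"
    and cl: "\<forall>x\<in>X. Dset S x \<inter> {m..} \<subseteq> X" and mc: "int (2*conductor S) - 1 \<le> int m"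
  shows "card (DsetA S X) + card (Qs {p. m + p \<in> X}) = card X + card {\<beta>. \<beta> < m \<and> \<beta> \<in> S}"
proof -
  define P where "P = {p. m + p \<in> X}"
  define c where "c = conductor S"
  define U where "U = {\<beta>. \<beta> < m \<and> \<beta> \<in> S}"
  define Out where "Out = (\<lambda>u. m - Suc u) ` Qs P"
  have P0: "0 \<in> P" using mX P_def by simp
  have fU: "finite U" unfolding U_def by simp
  have uc: "Suc u < c" if "u \<in> Qs P" for u
  proof -
    have "0 + u + 1 \<notin> S" using that P0 unfolding Qs_def by blast
    then show ?thesis using notS_lt c_def by simp
  qed
  have ucm: "Suc u \<le> m" "c \<le> m - Suc u" if "u \<in> Qs P" for u
    using uc[OF that] mc unfolding c_def by linarith+
  have OutU: "Out \<subseteq> U"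
  proof
    fix \<beta> assume "\<beta> \<in> Out"
    then obtain u where u: "u \<in> Qs P" "\<beta> = m - Suc u" unfolding Out_def by blast
    have "\<beta> \<in> S" using cond_prop ucm(2)[OF u(1)] u(2) c_def by simp
    moreover have "\<beta> < m" using ucm(1)[OF u(1)] u(2) by simp
    ultimately show "\<beta> \<in> U" unfolding U_def by simp
  qed
  have cOut: "card Out = card (Qs P)" unfolding Out_def
  proof (rule card_image)
    show "inj_on (\<lambda>u. m - Suc u) (Qs P)"
    proof (rule inj_onI)
      fix u v assume "u \<in> Qs P" "v \<in> Qs P" "m - Suc u = m - Suc v"
      then show "u = v" using ucm(1)[of u] ucm(1)[of v] by simp
    qed
  qed
  have DX: "DsetA S X = X \<union> (U - Out)"
  proof
    show "DsetA S X \<subseteq> X \<union> (U - Out)"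
    proof
      fix \<alpha> assume "\<alpha> \<in> DsetA S X"
      then obtain x where x: "x \<in> X" "\<alpha> \<in> S" "\<alpha> \<le> x" "x - \<alpha> \<in> S"
        unfolding DsetA_def Dset_def by blast
      show "\<alpha> \<in> X \<union> (U - Out)"
      proof (cases "m \<le> \<alpha>")
        case True
        then have "\<alpha> \<in> Dset S x \<inter> {m..}" using x unfolding Dset_def by simp
        then show ?thesis using cl x(1) by blast
      next
        case False
        then have "\<alpha> \<in> U" using x U_def by simp
        moreover have "\<alpha> \<notin> Out"
        proof
          assume "\<alpha> \<in> Out"
          then obtain u where u: "u \<in> Qs P" "\<alpha> = m - Suc u" unfolding Out_def by blast
          have "x - m \<in> P" using x(1) Xm P_def by simp
          then have "(x - m) + u + 1 \<notin> S" using u(1) unfolding Qs_def by blast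
          moreover have "x - \<alpha> = (x - m) + u + 1"
          proof -
            have "m \<le> x" using Xm x(1) by blast
            then show ?thesis using u(2) ucm(1)[OF u(1)] by linarith
          qed
          ultimately show False using x(4) by simp
        qed
        ultimately show ?thesis by blast
      qed
    qed
  next
    show "X \<union> (U - Out) \<subseteq> DsetA S X"
    proof
      fix \<alpha> assume a: "\<alpha> \<in> X \<union> (U - Out)"
      show "\<alpha> \<in> DsetA S X"
      proof (cases "\<alpha> \<in> X")
        case True
        then have "\<alpha> \<in> Dset S \<alpha>" using XS zero_in_S unfolding Dset_def by auto
        then show ?thesis using True unfolding DsetA_def by blast
      next
        case False
        then have aU: "\<alpha> \<in> U" "\<alpha> \<notin> Out" using a by auto
        show ?thesis
        proof (rule ccontr)
          assume nD: "\<alpha> \<notin> DsetA S X"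
          define u where "u = m - Suc \<alpha>"
          have am: "\<alpha> < m" "\<alpha> \<in> S" using aU U_def by auto
          have "u \<in> Qs P" unfolding Qs_def
          proof (intro CollectI ballI notI)
            fix p assume p: "p \<in> P" and h: "p + u + 1 \<in> S"
            have "(m + p) - \<alpha> = p + u + 1" using am u_def by simp
            then have "\<alpha> \<in> Dset S (m + p)" using h am unfolding Dset_def by simp
            then show False using nD p P_def unfolding DsetA_def by blast
          qed
          moreover have "\<alpha> = m - Suc u" using am u_def by simp
          ultimately have "\<alpha> \<in> Out" unfolding Out_def by blast
          then show False using aU by simp
        qed
      qed
    qed
  qed
  have disj: "X \<inter> (U - Out) = {}" using Xm U_def by auto
  have "card (DsetA S X) = card X + card (U - Out)"
    unfolding DX by (rule card_Un_disjoint) (use fX fU disj in auto)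
  moreover have "card (U - Out) = card U - card Out"
    by (rule card_Diff_subset) (use OutU fU finite_subset in auto)
  moreover have "card Out \<le> card U" using OutU fU by (rule card_mono[rotated])
  ultimately show ?thesis using cOut unfolding U_def P_def by simp
qed

end

lemma card_prefix:
  fixes K :: "nat set"
  assumes "finite K" "r \<le> card K"
  shows "\<exists>y. card (K \<inter> {..<y}) = r"
proof -
  obtain B where B: "K \<subseteq> {..<B}" using assms(1) finite_nat_set_iff_bounded by (auto simp: subset_eq)
  have KB: "K \<inter> {..<B} = K" using B by (metis Int_absorb2)
  have "\<forall>r. r \<le> card (K \<inter> {..<n}) \<longrightarrow> (\<exists>y. card (K \<inter> {..<y}) = r)" for n
  proof (induction n)
    case 0 then show ?case by auto
  next
    case (Suc n)
    have "K \<inter> {..<Suc n} \<subseteq> insert n (K \<inter> {..<n})" by auto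
    then have "card (K \<inter> {..<Suc n}) \<le> card (insert n (K \<inter> {..<n}))" by (rule card_mono[rotated]) simp
    also have "\<dots> \<le> Suc (card (K \<inter> {..<n}))" by (simp add: card_insert_if)
    finally have le: "card (K \<inter> {..<Suc n}) \<le> Suc (card (K \<inter> {..<n}))" .
    show ?case
    proof (intro allI impI)
      fix r assume r: "r \<le> card (K \<inter> {..<Suc n})"
      show "\<exists>y. card (K \<inter> {..<y}) = r"
      proof (cases "r \<le> card (K \<inter> {..<n})")
        case True then show ?thesis using Suc.IH by blast
      next
        case False
        then have "r = card (K \<inter> {..<Suc n})" using r le by linarith
        then show ?thesis by blast
      qed
    qed
  qed
  then show ?thesis using assms(2) KB by metis
qed

theorem lemma4p27:
  fixes a b m r :: nat and M :: "nat set"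
  assumes "0 < b" and "b < a"
    and "int m \<ge> 2 * int (conductor (interval_semigroup a b)) - 1"
    and "amenable (interval_semigroup a b) m r M"
  shows "\<exists>T. amenable (interval_semigroup a b) m r T \<and>
             (\<exists>k. m \<le> k \<and> shadow a b m T = {m..k}) \<and>
             card (DsetA (interval_semigroup a b) T) \<le> card (DsetA (interval_semigroup a b) M)"
proof -
  interpret ab a b using assms(1,2) by unfold_locales
  define SS where "SS = interval_semigroup a b"
  define c where "c = conductor SS"
  have am: "amenable SS m r M" using assms(4) SS_def by simp
  have fM: "finite M" and cM: "card M = r" and MS: "M \<subseteq> SS" and mM: "m \<in> M"
    and Mm: "\<forall>x\<in>M. m \<le> x" and mc: "int (2 * conductor SS) - 1 \<le> int m"
    and clM: "\<forall>x\<in>M. Dset SS x \<inter> {m..} \<subseteq> M"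
    using am unfolding amenable_def by auto
  have cm: "c \<le> m" using mc c_def by linarith
  have geS: "x \<in> SS" if "m \<le> x" for x using cond_prop[of x] cm that c_def SS_def by simp
  define P where "P = {p. m + p \<in> M}"
  have Mimg: "M = (+) m ` P"
  proof
    show "M \<subseteq> (+) m ` P"
    proof
      fix x assume x: "x \<in> M"
      then have "x = m + (x - m)" "x - m \<in> P" using Mm P_def by auto
      then show "x \<in> (+) m ` P" by blast
    qed
  qed (auto simp: P_def)
  have cP: "card P = r" using cM Mimg by (metis card_image inj_on_add)
  have fP: "finite P" using fM Mimg by (metis finite_imageD inj_on_add)
  have P0: "0 \<in> P" using mM P_def by simp
  have dP: "down P" unfolding down_def
  proof (intro ballI impI)
    fix p s assume p: "p \<in> P" and s: "s \<in> S" "s \<le> p"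
    have "m + (p - s) \<in> Dset SS (m + p) \<inter> {m..}"
      using geS[of "m + (p - s)"] s SS_def unfolding Dset_def by simp
    then have "m + (p - s) \<in> M" using clM p P_def by blast
    then show "p - s \<in> P" using P_def by simp
  qed
  define q where "q = card (P \<inter> {..<a+b})"
  have qle: "q \<le> a + b" unfolding q_def using card_mono[of "{..<a+b}" "P \<inter> {..<a+b}"] by simp
  have qr: "q \<le> r" unfolding q_def using cP card_mono[OF fP, of "P \<inter> {..<a+b}"] by simp
  have q1: "1 \<le> q"
  proof -
    have "0 \<in> P \<inter> {..<a+b}" using P0 ba by simp
    then have "P \<inter> {..<a+b} \<noteq> {}" by blast
    then show ?thesis unfolding q_def by (simp add: card_gt_0_iff Suc_le_eq)
  qed
  show ?thesis
  proof (cases "q = a + b")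
    case True
    have "P \<inter> {..<a+b} = {..<a+b}"
      by (rule card_subset_eq) (use True q_def in auto)
    then have sh: "shadow a b m M = {m..m+a+b-1}"
    proof -
      assume PA: "P \<inter> {..<a+b} = {..<a+b}"
      show ?thesis
      proof
        show "shadow a b m M \<subseteq> {m..m+a+b-1}" unfolding shadow_def by auto
        show "{m..m+a+b-1} \<subseteq> shadow a b m M"
        proof
          fix x assume x: "x \<in> {m..m+a+b-1}"
          then have "x - m \<in> {..<a+b}" using ba by auto
          then have "x - m \<in> P" using PA by blast
          then have "x \<in> M" using x P_def by simp
          then show "x \<in> shadow a b m M" using x ba unfolding shadow_def by auto
        qed
      qed
    qed
    have "m \<le> m+a+b-1" using ba by simp
    then have ex: "\<exists>k. m \<le> k \<and> shadow a b m M = {m..k}" using sh by blast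
    show ?thesis
    proof (intro exI[of _ M] conjI)
      show "amenable (interval_semigroup a b) m r M" by (rule assms(4))
      show "\<exists>k. m \<le> k \<and> shadow a b m M = {m..k}" by (rule ex)
    qed simp
  next
    case False
    then have qlt: "q < a + b" using qle by simp
    have rK: "r \<le> card (K q)" using claimA[OF dP fP] qlt cP q_def by simp
    obtain y where y: "card (K q \<inter> {..<y}) = r" using card_prefix[OF K_finite rK] by blast
    define PT where "PT = K q \<inter> {..<y}"
    define T where "T = (+) m ` PT"
    have yq: "q \<le> y"
    proof (rule ccontr)
      assume "\<not> q \<le> y"
      then have "{..<y} \<subseteq> {..<q}" by simp
      moreover have "{..<q} \<subseteq> K q" using K_low[OF qle] by blast
      ultimately have "{..<y} \<subseteq> K q" by (rule subset_trans)
      then have "PT = {..<y}" unfolding PT_def by blast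
      then show False using y PT_def qr \<open>\<not> q \<le> y\<close> by simp
    qed
    have "PT \<inter> {..<a+b} = (K q \<inter> {..<a+b}) \<inter> {..<y}" unfolding PT_def by (simp add: Int_ac)
    also have "\<dots> = {..<q} \<inter> {..<y}" using K_low[OF qle] by simp
    also have "\<dots> = {..<q}" using yq by (simp add: Int_absorb2)
    finally have PTlow: "PT \<inter> {..<a+b} = {..<q}" .
    have PTK: "PT \<subseteq> K q" unfolding PT_def by blast
    have fPT: "finite PT" unfolding PT_def by simp
    have "0 \<in> {..<q}" using q1 by simp
    then have PT0: "0 \<in> PT" using PTlow by blast
    have dPT: "down PT" unfolding down_def
    proof (intro ballI impI)
      fix p s assume ps: "p \<in> PT" "s \<in> S" "s \<le> p"
      then have "p \<in> K q" using PTK by blast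
      then have "p - s \<in> K q" using K_down ps(2,3) unfolding down_def by blast
      moreover have "p - s < y" using ps(1) unfolding PT_def by auto
      ultimately show "p - s \<in> PT" unfolding PT_def by simp
    qed
    have cT: "card T = r" unfolding T_def using y PT_def by (simp add: card_image)
    have amT: "amenable SS m r T" unfolding amenable_def
    proof (intro conjI)
      show "finite T" using fPT T_def by simp
      show "card T = r" by (rule cT)
      show "T \<subseteq> SS" using geS T_def by auto
      show "m \<in> T" using PT0 T_def by simp
      show "\<forall>x\<in>T. m \<le> x" using T_def by simp
      show "int (2 * conductor SS) - 1 \<le> int m" by (rule mc)
      show "\<forall>x\<in>T. Dset SS x \<inter> {m..} \<subseteq> T"
      proof (intro ballI subsetI)
        fix x \<alpha> assume x: "x \<in> T" and al: "\<alpha> \<in> Dset SS x \<inter> {m..}"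
        then obtain p where p: "p \<in> PT" "x = m + p" using T_def by blast
        have al2: "m \<le> \<alpha>" "\<alpha> \<le> x" "x - \<alpha> \<in> S" using al SS_def unfolding Dset_def by auto
        have "x - \<alpha> \<le> p" using p al2 by simp
        then have "p - (x - \<alpha>) \<in> PT" using dPT p(1) al2(3) unfolding down_def by blast
        moreover have "p - (x - \<alpha>) = \<alpha> - m" using p al2 by simp
        ultimately have "m + (\<alpha> - m) \<in> T" using T_def by simp
        then show "\<alpha> \<in> T" using al2 by simp
      qed
    qed
    have shT: "shadow a b m T = {m..m+q-1}"
    proof -
      have "shadow a b m T = (+) m ` (PT \<inter> {..<a+b})"
        unfolding shadow_def T_def by auto
      also have "\<dots> = {m..m+q-1}" unfolding PTlow
      proof
        show "(+) m ` {..<q} \<subseteq> {m..m+q-1}" by auto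
        show "{m..m+q-1} \<subseteq> (+) m ` {..<q}"
        proof
          fix x assume x: "x \<in> {m..m+q-1}"
          then have "x = m + (x - m)" "x - m < q" using q1 by auto
          then show "x \<in> (+) m ` {..<q}" by blast
        qed
      qed
      finally show ?thesis .
    qed
    have mT: "m \<in> T" using PT0 T_def by simp
    have DT: "card (DsetA S T) + card (Qs PT) = card T + card {\<beta>. \<beta> < m \<and> \<beta> \<in> S}"
    proof -
      have "{p. m + p \<in> T} = PT" unfolding T_def by auto
      moreover have "card (DsetA S T) + card (Qs {p. m + p \<in> T}) = card T + card {\<beta>. \<beta> < m \<and> \<beta> \<in> S}"
      proof (rule D_card)
        show "finite T" "\<forall>x\<in>T. m \<le> x" "m \<in> T" "T \<subseteq> S"
          "\<forall>x\<in>T. Dset S x \<inter> {m..} \<subseteq> T" "int (2*conductor S) - 1 \<le> int m"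
          using amT unfolding SS_def amenable_def by blast+
      qed
      ultimately show ?thesis by simp
    qed
    have DM: "card (DsetA S M) + card (Qs P) = card M + card {\<beta>. \<beta> < m \<and> \<beta> \<in> S}"
      unfolding P_def
    proof (rule D_card)
      show "finite M" "\<forall>x\<in>M. m \<le> x" "m \<in> M" "M \<subseteq> S"
        "\<forall>x\<in>M. Dset S x \<inter> {m..} \<subseteq> M" "int (2*conductor S) - 1 \<le> int m"
        using am unfolding SS_def amenable_def by blast+
    qed
    have QQ: "card (Qs P) \<le> card (Qs PT)"
    proof -
      define q' where "q' = card (Qs P \<inter> {..<a+b})"
      have q'le: "q' \<le> a - q"
      proof (cases "Qs P \<inter> {..<a+b} = {}")
        case True then show ?thesis using q'_def by simp
      next
        case False then have "q' + q \<le> a" using Qs_small[OF P0] q'_def q_def by simp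
        then show ?thesis by simp
      qed
      have q'lt: "q' < a + b"
      proof (cases "Qs P \<inter> {..<a+b} = {}")
        case True then show ?thesis using q'_def ba by simp
      next
        case False then have "q' + q \<le> a" using Qs_small[OF P0] q'_def q_def by simp
        then show ?thesis using bpos by simp
      qed
      have "card (Qs P) \<le> card (K q')"
        using claimA[OF Qs_down Qs_finite[OF P0]] q'lt q'_def by simp
      also have "\<dots> \<le> card (K (a - q))" using K_mono[OF q'le] K_finite by (rule card_mono[rotated])
      also have "\<dots> \<le> card (Qs PT)" using K_in_Qs[OF PTK] Qs_finite[OF PT0] by (rule card_mono[rotated])
      finally show ?thesis .
    qed
    have "card (DsetA S T) \<le> card (DsetA S M)" using DT DM QQ cT cM by linarith
    then have cD: "card (DsetA (interval_semigroup a b) T) \<le> card (DsetA (interval_semigroup a b) M)"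
      by simp
    have "m \<le> m+q-1" using q1 by simp
    then have ex: "\<exists>k. m \<le> k \<and> shadow a b m T = {m..k}" using shT by blast
    show ?thesis
    proof (intro exI[of _ T] conjI)
      show "amenable (interval_semigroup a b) m r T" using amT SS_def by simp
      show "\<exists>k. m \<le> k \<and> shadow a b m T = {m..k}" by (rule ex)
    qed (rule cD)
  qed
qed

end
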